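(* Let $K$ be a finite simplicial complex with positive edge lengths, and let $h\in H_d(K;\mathbb{Z}_2)$ be a homology class. Let $z_r$ be a cycle in $h$ of minimal radius and $z_d$ a cycle in $h$ of minimal diameter. Then $\mathrm{diam}(z_r)\le 2\,\mathrm{diam}(z_d)$.
   Context: For vertices $p,q$ of $K$, $\mathrm{dist}(p,q)$ is the length of a shortest path between them in the 1-skeleton of $K$. For a cycle $z$ with vertex set $\mathrm{Vert}(z)$: $\mathrm{diam}(z)=\max_{p,q\in\mathrm{Vert}(z)}\mathrm{dist}(p,q)$ and $\mathrm{rad}(z)=\min_{p\in\mathrm{Vert}(K)}\max_{q\in\mathrm{Vert}(z)}\mathrm{dist}(p,q)$. Thus $z_r=\arg\min_{z\in h}\mathrm{rad}(z)$ and $z_d=\arg\min_{z\in h}\mathrm{diam}(z)$. *)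

theory Defs
  imports Main "HOL-Library.Extended_Nonnegative_Real"
begin

definition simplicial_complex :: "'a set set \<Rightarrow> bool" where
  "simplicial_complex K \<longleftrightarrow> finite K \<and> (\<forall>\<sigma>\<in>K. \<sigma> \<noteq> {} \<and> finite \<sigma>) \<and>
     (\<forall>\<sigma>\<in>K. \<forall>\<tau>. \<tau> \<subseteq> \<sigma> \<and> \<tau> \<noteq> {} \<longrightarrow> \<tau> \<in> K)"

definition simplices :: "'a set set \<Rightarrow> nat \<Rightarrow> 'a set set" where
  "simplices K d = {\<sigma>\<in>K. card \<sigma> = Suc d}"

text \<open>Z2 d-chains are sets of d-simplices.\<close>
definition chain :: "'a set set \<Rightarrow> nat \<Rightarrow> 'a set set \<Rightarrow> bool" where
  "chain K d c \<longleftrightarrow> c \<subseteq> simplices K d"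

definition boundary :: "nat \<Rightarrow> 'a set set \<Rightarrow> 'a set set" where
  "boundary d c = (if d = 0 then {} else
     {\<tau>. card \<tau> = d \<and> odd (card {\<sigma>\<in>c. \<tau> \<subseteq> \<sigma>})})"

definition cycle :: "'a set set \<Rightarrow> nat \<Rightarrow> 'a set set \<Rightarrow> bool" where
  "cycle K d z \<longleftrightarrow> chain K d z \<and> boundary d z = {}"

definition is_boundary :: "'a set set \<Rightarrow> nat \<Rightarrow> 'a set set \<Rightarrow> bool" where
  "is_boundary K d z \<longleftrightarrow> (\<exists>b. chain K (Suc d) b \<and> boundary (Suc d) b = z)"

definition symdiff :: "'a set \<Rightarrow> 'a set \<Rightarrow> 'a set" where
  "symdiff A B = (A - B) \<union> (B - A)"

text \<open>h is a class of H_d(K;Z2), represented as the set of cycles in it.\<close>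
definition homology_class :: "'a set set \<Rightarrow> nat \<Rightarrow> 'a set set set \<Rightarrow> bool" where
  "homology_class K d h \<longleftrightarrow> (\<exists>z0. cycle K d z0 \<and>
      h = {z. cycle K d z \<and> is_boundary K d (symdiff z z0)})"

definition Vert :: "'a set set \<Rightarrow> 'a set" where
  "Vert z = \<Union> z"

definition walk :: "'a set set \<Rightarrow> 'a \<Rightarrow> 'a \<Rightarrow> 'a list \<Rightarrow> bool" where
  "walk K p q xs \<longleftrightarrow> xs \<noteq> [] \<and> hd xs = p \<and> last xs = q \<and> set xs \<subseteq> \<Union> K \<and>
     (\<forall>i < length xs - 1. xs ! i \<noteq> xs ! Suc i \<and> {xs ! i, xs ! Suc i} \<in> K)"

definition walk_len :: "('a set \<Rightarrow> real) \<Rightarrow> 'a list \<Rightarrow> ennreal" where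
  "walk_len w xs = (\<Sum>i < length xs - 1. ennreal (w {xs ! i, xs ! Suc i}))"

text \<open>Shortest-path distance in the weighted 1-skeleton (\<infinity> if no path).\<close>
definition cdist :: "'a set set \<Rightarrow> ('a set \<Rightarrow> real) \<Rightarrow> 'a \<Rightarrow> 'a \<Rightarrow> ennreal" where
  "cdist K w p q = (INF xs \<in> {xs. walk K p q xs}. walk_len w xs)"

definition diam :: "'a set set \<Rightarrow> ('a set \<Rightarrow> real) \<Rightarrow> 'a set set \<Rightarrow> ennreal" where
  "diam K w z = (SUP p \<in> Vert z. SUP q \<in> Vert z. cdist K w p q)"

definition rad :: "'a set set \<Rightarrow> ('a set \<Rightarrow> real) \<Rightarrow> 'a set set \<Rightarrow> ennreal" where
  "rad K w z = (INF p \<in> \<Union> K. SUP q \<in> Vert z. cdist K w p q)"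

end

theory Submission
  imports Defs
begin

lemma INF_g:
  fixes g :: "ennreal \<Rightarrow> ennreal" and f :: "'b \<Rightarrow> ennreal"
  assumes "mono g" "\<And>x S. continuous (at x within S) g" "S \<noteq> {}"
  shows "g (INF x\<in>S. f x) = (INF x\<in>S. g (f x))"
  using continuous_at_Inf_mono[of g "f ` S"] assms by (simp add: image_comp)

lemma cont1: "continuous (at x within S) (\<lambda>x::ennreal. x + c)" by (intro continuous_intros continuous_ident)
lemma cont2: "continuous (at x within S) (\<lambda>x::ennreal. x + x)" by (intro continuous_intros continuous_ident)

lemma mono1: "mono (\<lambda>x::ennreal. x + c)" by (rule monoI) (rule add_right_mono)
lemma mono2: "mono (\<lambda>x::ennreal. c + x)" by (rule monoI) (rule add_left_mono)
lemma mono3: "mono (\<lambda>x::ennreal. x + x)" by (rule monoI) (rule add_mono)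
lemma cont3: "continuous (at x within S) (\<lambda>x::ennreal. c + x)" by (intro continuous_intros continuous_ident)

fun adj_ok :: "'a set set \<Rightarrow> 'a list \<Rightarrow> bool" where
  "adj_ok K (a#b#xs) = (a \<noteq> b \<and> {a,b} \<in> K \<and> adj_ok K (b#xs))"
| "adj_ok K _ = True"

fun wl :: "('a set \<Rightarrow> real) \<Rightarrow> 'a list \<Rightarrow> ennreal" where
  "wl w (a#b#xs) = ennreal (w {a,b}) + wl w (b#xs)"
| "wl w _ = 0"

lemma adj_ok_iff: "adj_ok K xs \<longleftrightarrow> (\<forall>i < length xs - 1. xs ! i \<noteq> xs ! Suc i \<and> {xs ! i, xs ! Suc i} \<in> K)"
proof (induction K xs rule: adj_ok.induct)
  case (1 K a b xs)
  have "(\<forall>i < length (a#b#xs) - 1. P i) \<longleftrightarrow> P 0 \<and> (\<forall>i < length (b#xs) - 1. P (Suc i))" for P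
    by (auto simp: less_Suc_eq_0_disj)
  then show ?case using 1 by simp
qed auto

lemma wl_eq: "walk_len w xs = wl w xs"
proof (induction w xs rule: wl.induct)
  case (1 w a b xs)
  have "walk_len w (a#b#xs) = (\<Sum>i < Suc (length (b#xs) - 1). ennreal (w {(a#b#xs) ! i, (a#b#xs) ! Suc i}))"
    by (simp add: walk_len_def)
  also have "\<dots> = ennreal (w {a,b}) + walk_len w (b#xs)"
    by (subst sum.lessThan_Suc_shift) (simp add: walk_len_def)
  finally show ?case using 1 by simp
qed (auto simp: walk_len_def)

lemma wl_app: "wl w (xs @ [y] @ ys) = wl w (xs @ [y]) + wl w (y # ys)"
  by (induction w xs rule: wl.induct) (auto simp: add.assoc)

lemma adj_app: "adj_ok K (xs @ [y] @ ys) = (adj_ok K (xs @ [y]) \<and> adj_ok K (y # ys))"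
  by (induction K xs rule: adj_ok.induct) auto

lemma wl_rev: "wl w (rev xs) = wl w xs"
proof (induction w xs rule: wl.induct)
  case (1 w a b xs)
  have "wl w (rev (a#b#xs)) = wl w (rev xs @ [b] @ [a])" by simp
  also have "\<dots> = wl w (rev (b#xs)) + wl w [b,a]" by (subst wl_app) simp
  finally show ?case using 1 by (simp add: insert_commute add.commute)
qed auto

lemma adj_rev: "adj_ok K (rev xs) = adj_ok K xs"
proof (induction K xs rule: adj_ok.induct)
  case (1 K a b xs)
  have "adj_ok K (rev (a#b#xs)) = adj_ok K (rev xs @ [b] @ [a])" by simp
  also have "\<dots> = (adj_ok K (rev (b#xs)) \<and> adj_ok K [b,a])" by (subst adj_app) simp
  finally show ?case using 1 by (auto simp: insert_commute)
qed auto

lemma walk_iff: "walk K p q xs \<longleftrightarrow> xs \<noteq> [] \<and> hd xs = p \<and> last xs = q \<and> set xs \<subseteq> \<Union> K \<and> adj_ok K xs"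
  by (simp add: walk_def adj_ok_iff)

lemma cdist_alt: "cdist K w p q = (INF xs \<in> {xs. walk K p q xs}. wl w xs)"
  by (simp add: cdist_def wl_eq)

lemma cdist_sym: "cdist K w p q = cdist K w q p"
proof -
  have "rev ` {xs. walk K p q xs} = {xs. walk K q p xs}"
  proof -
    have *: "walk K p q xs \<Longrightarrow> walk K q p (rev xs)" for p q xs
      by (auto simp: walk_iff adj_rev hd_rev last_rev)
    show ?thesis using *[of q p] by (auto intro!: image_eqI[where x="rev _"] dest: *)
  qed
  then show ?thesis unfolding cdist_alt
    by (metis (no_types, lifting) INF_cong image_comp comp_def wl_rev INF_image)
qed

lemma cdist_le: "walk K p q xs \<Longrightarrow> cdist K w p q \<le> wl w xs"
  unfolding cdist_alt by (rule INF_lower) simp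

lemma cdist_tri: "cdist K w p r \<le> cdist K w p q + cdist K w q r"
proof (cases "{xs. walk K p q xs} = {} \<or> {xs. walk K q r xs} = {}")
  case True
  then show ?thesis
  proof
    assume "{xs. walk K p q xs} = {}"
    then have "cdist K w p q = top" unfolding cdist_alt by (simp only: image_empty Inf_empty)
    then show ?thesis by simp
  next
    assume "{xs. walk K q r xs} = {}"
    then have "cdist K w q r = top" unfolding cdist_alt by (simp only: image_empty Inf_empty)
    then show ?thesis by simp
  qed
next
  case False
  then have A: "{xs. walk K p q xs} \<noteq> {}" and B: "{xs. walk K q r xs} \<noteq> {}" by auto
  have key: "cdist K w p r \<le> wl w xs + wl w ys" if W1: "walk K p q xs" and W2: "walk K q r ys" for xs ys
  proof -
    obtain xs' where xs: "xs = xs' @ [q]" using W1 unfolding walk_iff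
      by (metis append_butlast_last_id)
    obtain ys' where ys: "ys = q # ys'" using W2 unfolding walk_iff
      by (metis list.collapse)
    have "walk K p r (xs' @ [q] @ ys')"
      using W1 W2 adj_app[of K xs' q ys'] unfolding walk_iff xs ys
      by (cases xs') auto
    then have "cdist K w p r \<le> wl w (xs' @ [q] @ ys')" by (rule cdist_le)
    also have "\<dots> = wl w xs + wl w ys" using wl_app[of w xs' q ys'] by (simp add: xs ys)
    finally show ?thesis .
  qed
  have "cdist K w p r \<le> (INF xs\<in>{xs. walk K p q xs}. wl w xs + wl w ys)" if "walk K q r ys" for ys
    using key that by (auto intro!: INF_greatest)
  also have "(INF xs\<in>{xs. walk K p q xs}. wl w xs + wl w ys) = cdist K w p q + wl w ys" for ys
    unfolding cdist_alt
    by (rule INF_g[symmetric, of "\<lambda>x. x + wl w ys"]) (rule mono1, rule cont1, rule A)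
  finally have "cdist K w p r \<le> (INF ys\<in>{ys. walk K q r ys}. cdist K w p q + wl w ys)"
    by (auto intro!: INF_greatest)
  also have "\<dots> = cdist K w p q + cdist K w q r"
    unfolding cdist_alt[of K w q r]
    by (rule INF_g[symmetric, of "\<lambda>x. cdist K w p q + x"])
       (rule mono2, rule cont3, rule B)
  finally show ?thesis .
qed

lemma diam_le_2rad: "diam K w z \<le> 2 * rad K w z"
proof (cases "\<Union>K = {}")
  case True
  then have "rad K w z = top" unfolding rad_def by (simp only: image_empty Inf_empty)
  then show ?thesis by (simp add: ennreal_mult_top)
next
  case False
  define S where "S p = (SUP q\<in>Vert z. cdist K w p q)" for p
  have "diam K w z \<le> S p + S p" for p
    unfolding diam_def
  proof (intro SUP_least)
    fix q1 q2 assume "q1 \<in> Vert z" "q2 \<in> Vert z"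
    have "cdist K w q1 q2 \<le> cdist K w q1 p + cdist K w p q2" by (rule cdist_tri)
    also have "\<dots> = cdist K w p q1 + cdist K w p q2" by (simp add: cdist_sym)
    also have "\<dots> \<le> S p + S p" unfolding S_def
      by (intro add_mono SUP_upper) fact+
    finally show "cdist K w q1 q2 \<le> S p + S p" .
  qed
  then have "diam K w z \<le> (INF p\<in>\<Union>K. S p + S p)" by (auto intro!: INF_greatest)
  also have "\<dots> = (INF p\<in>\<Union>K. S p) + (INF p\<in>\<Union>K. S p)"
    by (rule INF_g[symmetric, of "\<lambda>x. x + x"]) (rule mono3, rule cont2, use False in auto)
  also have "\<dots> = 2 * rad K w z" unfolding rad_def S_def by (simp add: mult_2)
  finally show ?thesis .
qed

lemma rad_le_diam: assumes "Vert z \<subseteq> \<Union>K" "\<Union>K \<noteq> {}" shows "rad K w z \<le> diam K w z"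
proof -
  obtain p where p: "p \<in> \<Union>K" "Vert z = {} \<or> p \<in> Vert z" using assms by blast
  have "rad K w z \<le> (SUP q\<in>Vert z. cdist K w p q)" unfolding rad_def by (rule INF_lower) fact
  also have "\<dots> \<le> diam K w z"
    using p(2)
  proof
    assume "Vert z = {}" then show ?thesis by simp
  next
    assume "p \<in> Vert z" then show ?thesis unfolding diam_def by (rule SUP_upper)
  qed
  finally show ?thesis .
qed

theorem theorem2p6:
  fixes K :: "'a set set" and w :: "'a set \<Rightarrow> real" and d :: nat
    and h :: "'a set set set" and z_r z_d :: "'a set set"
  assumes "simplicial_complex K"
    and "\<forall>e\<in>K. card e = 2 \<longrightarrow> w e > 0"
    and "homology_class K d h"
    and "z_r \<in> h" and "\<forall>z\<in>h. rad K w z_r \<le> rad K w z"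
    and "z_d \<in> h" and "\<forall>z\<in>h. diam K w z_d \<le> diam K w z"
  shows "diam K w z_r \<le> 2 * diam K w z_d"
proof -
  have sub: "z \<subseteq> K" if "z \<in> h" for z
    using assms(3) that by (auto simp: homology_class_def cycle_def chain_def simplices_def)
  show ?thesis
  proof (cases "\<Union>K = {}")
    case True
    then have "Vert z_r = {}" using sub[OF assms(4)] by (auto simp: Vert_def)
    then show ?thesis by (simp add: diam_def)
  next
    case False
    have "diam K w z_r \<le> 2 * rad K w z_r" by (rule diam_le_2rad)
    also have "\<dots> \<le> 2 * rad K w z_d" using assms(5,6) by (auto intro: mult_left_mono)
    also have "\<dots> \<le> 2 * diam K w z_d"
      using sub[OF assms(6)] False by (intro mult_left_mono rad_le_diam) (auto simp: Vert_def)
    finally show ?thesis .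
  qed
qed

end
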